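(* The Leftmost and Median mechanisms have unbounded approximation ratio of the Nash welfare, while the MidOrNearest mechanism $2$-approximates the Nash welfare.
   Context: One facility is located on $[0,1]$; $n\ge1$ agents (any $n$) have locations $x_1\le\dots\le x_n$ in $[0,1]$. For a facility at $y$, agent $i$ has utility $u_i=1-|x_i-y|$. The Nash welfare is $\left(\prod_{i=1}^n u_i\right)^{1/n}$. The Leftmost mechanism locates the facility at $x_1$; the Median mechanism at $x_{\lceil n/2\rceil}$; the MidOrNearest mechanism at $x_n$ if $x_n<1/2$, at $1/2$ if $x_1\le1/2\le x_n$, and at $x_1$ if $x_1>1/2$. For a mechanism $M$, the approximation ratio of the Nash welfare is the supremum over all profiles $x$ (all numbers of agents) of $\mathrm{OPT}(x)/\mathrm{NW}(M(x))$, where $\mathrm{OPT}(x)$ is the maximum Nash welfare over facility locations in $[0,1]$ (the ratio is $+\infty$ if $\mathrm{NW}(M(x))=0$); $M$ "$\alpha$-approximates" the Nash welfare if this ratio equals $\alpha$. *)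

theory Defs
  imports Complex_Main "HOL-Library.Extended_Real"
begin

definition valid_profile :: "real list \<Rightarrow> bool" where
  "valid_profile xs \<longleftrightarrow> xs \<noteq> [] \<and> sorted xs \<and> set xs \<subseteq> {0..1}"

definition utility :: "real \<Rightarrow> real \<Rightarrow> real" where
  "utility x y = 1 - \<bar>x - y\<bar>"

definition nash_welfare :: "real list \<Rightarrow> real \<Rightarrow> real" where
  "nash_welfare xs y = root (length xs) (prod_list (map (\<lambda>x. utility x y) xs))"

definition opt_nw :: "real list \<Rightarrow> real" where
  "opt_nw xs = Sup (nash_welfare xs ` {0..1})"

text \<open>Mechanisms (on sorted lists; index is 0-based).\<close>
definition leftmost :: "real list \<Rightarrow> real" where
  "leftmost xs = hd xs"

definition median :: "real list \<Rightarrow> real" where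
  "median xs = xs ! ((length xs + 1) div 2 - 1)"

definition mid_or_nearest :: "real list \<Rightarrow> real" where
  "mid_or_nearest xs =
     (if last xs < 1/2 then last xs
      else if hd xs \<le> 1/2 \<and> 1/2 \<le> last xs then 1/2
      else hd xs)"

definition ratio_at :: "(real list \<Rightarrow> real) \<Rightarrow> real list \<Rightarrow> ereal" where
  "ratio_at M xs =
     (if nash_welfare xs (M xs) = 0 then \<infinity>
      else ereal (opt_nw xs / nash_welfare xs (M xs)))"

definition approx_ratio :: "(real list \<Rightarrow> real) \<Rightarrow> ereal" where
  "approx_ratio M = (SUP xs \<in> {xs. valid_profile xs}. ratio_at M xs)"

end

theory Submission
  imports Defs
begin

lemma prod_list_lower:
  fixes f :: "'a \<Rightarrow> real"
  assumes "0 \<le> a" "\<forall>x\<in>set xs. a \<le> f x"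
  shows "a ^ length xs \<le> prod_list (map f xs)"
  using assms
proof (induction xs)
  case Nil then show ?case by simp
next
  case (Cons y ys)
  then show ?case by (simp add: mult_mono order_trans[OF _ zero_le_power])
qed

lemma prod_list_upper:
  fixes f :: "'a \<Rightarrow> real"
  assumes "\<forall>x\<in>set xs. 0 \<le> f x \<and> f x \<le> 1"
  shows "prod_list (map f xs) \<le> 1 \<and> 0 \<le> prod_list (map f xs)"
  using assms
proof (induction xs)
  case Nil then show ?case by simp
next
  case (Cons y ys)
  then show ?case by (simp add: mult_le_one)
qed

lemma nw_le1:
  assumes "valid_profile xs" "y \<in> {0..1}"
  shows "nash_welfare xs y \<le> 1"
proof -
  have "\<forall>x\<in>set xs. 0 \<le> utility x y \<and> utility x y \<le> 1"
  proof
    fix x assume "x \<in> set xs"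
    then have "0 \<le> x" "x \<le> 1" using assms by (auto simp: valid_profile_def)
    then show "0 \<le> utility x y \<and> utility x y \<le> 1" using assms by (auto simp: utility_def)
  qed
  then have "prod_list (map (\<lambda>x. utility x y) xs) \<le> 1"
    using prod_list_upper[of xs "\<lambda>x. utility x y"] by simp
  moreover have "0 < length xs" using assms by (simp add: valid_profile_def)
  ultimately show ?thesis unfolding nash_welfare_def
    by (metis real_root_le_iff real_root_one)
qed

lemma opt_le1:
  assumes "valid_profile xs"
  shows "opt_nw xs \<le> 1"
  unfolding opt_nw_def
  by (rule cSup_least) (use assms nw_le1 in auto)

lemma opt_ge:
  assumes "valid_profile xs" "y \<in> {0..1}"
  shows "nash_welfare xs y \<le> opt_nw xs"
  unfolding opt_nw_def
proof (rule cSup_upper)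
  show "bdd_above (nash_welfare xs ` {0..1})"
    using nw_le1[OF assms(1)] by (auto intro!: bdd_aboveI[of _ 1])
qed (use assms in auto)

lemma sorted_hd_le: "sorted xs \<Longrightarrow> x \<in> set xs \<Longrightarrow> hd xs \<le> x"
  by (cases xs) auto

lemma sorted_le_last: "sorted xs \<Longrightarrow> x \<in> set xs \<Longrightarrow> x \<le> last xs"
  by (metis in_set_conv_nth last_conv_nth length_pos_if_in_set less_Suc_eq_le
      Suc_pred' sorted_nth_mono diff_less zero_less_one nth_mem list.size(3) less_irrefl)

lemma mon_util:
  assumes "valid_profile xs" "x \<in> set xs"
  shows "1/2 \<le> utility x (mid_or_nearest xs)"
proof -
  have s: "sorted xs" and r: "set xs \<subseteq> {0..1}" and ne: "xs \<noteq> []"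
    using assms by (auto simp: valid_profile_def)
  have h: "hd xs \<le> x" "x \<le> last xs" using sorted_hd_le[OF s assms(2)] sorted_le_last[OF s assms(2)] by auto
  have "x \<in> {0..1}" using r assms(2) by auto
  moreover have "last xs \<in> {0..1}" "hd xs \<in> {0..1}" using r last_in_set[OF ne] hd_in_set[OF ne] by blast+
  ultimately show ?thesis using h unfolding mid_or_nearest_def utility_def
    by (auto split: if_splits abs_split)
qed

lemma mon_nw:
  assumes "valid_profile xs"
  shows "1/2 \<le> nash_welfare xs (mid_or_nearest xs)"
proof -
  have n: "0 < length xs" using assms by (simp add: valid_profile_def)
  have "(1/2::real) ^ length xs \<le> prod_list (map (\<lambda>x. utility x (mid_or_nearest xs)) xs)"
    by (rule prod_list_lower) (use mon_util[OF assms] in auto)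
  then have "root (length xs) ((1/2::real) ^ length xs) \<le> nash_welfare xs (mid_or_nearest xs)"
    unfolding nash_welfare_def using n by simp
  then show ?thesis using real_root_power_cancel[OF n, of "1/2"] by simp
qed

lemma mon_le2: "approx_ratio mid_or_nearest \<le> 2"
  unfolding approx_ratio_def
proof (rule SUP_least)
  fix xs assume "xs \<in> {xs. valid_profile xs}"
  then have v: "valid_profile xs" by simp
  have a: "1/2 \<le> nash_welfare xs (mid_or_nearest xs)" by (rule mon_nw[OF v])
  have b: "opt_nw xs \<le> 1" by (rule opt_le1[OF v])
  have "opt_nw xs / nash_welfare xs (mid_or_nearest xs) \<le> 2"
    using a b by (simp add: divide_le_eq)
  then show "ratio_at mid_or_nearest xs \<le> 2"
    unfolding ratio_at_def using a by simp
qed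

lemma root_lim: "(\<lambda>k. root (Suc k) (1 / (4 * real (Suc k)))) \<longlonglongrightarrow> 1"
proof -
  have "(\<lambda>k. root k (1/4) / root k (real k)) \<longlonglongrightarrow> 1 / 1"
    by (intro tendsto_divide LIMSEQ_root_const LIMSEQ_root) auto
  then have "(\<lambda>k. root k (1 / (4 * real k))) \<longlonglongrightarrow> 1"
    by (simp add: real_root_divide[symmetric])
  then show ?thesis by (rule LIMSEQ_Suc)
qed

lemma prof_bound:
  fixes m :: nat
  assumes m0: "0 < m"
  defines "xs \<equiv> 0 # replicate m (1::real)"
  shows "valid_profile xs" "mid_or_nearest xs = 1/2"
    "nash_welfare xs (1/2) = 1/2"
    "root (Suc m) (1 / (4 * real (Suc m))) \<le> opt_nw xs"
proof -
  show v: "valid_profile xs" unfolding xs_def valid_profile_def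
    by (auto simp: sorted_append)
  show "mid_or_nearest xs = 1/2" unfolding xs_def mid_or_nearest_def
    using m0 by (cases m) auto
  have "prod_list (map (\<lambda>x. utility x (1/2)) xs) = (1/2) ^ Suc m"
    unfolding xs_def by (simp add: utility_def prod_list_replicate)
  then show "nash_welfare xs (1/2) = 1/2"
    unfolding nash_welfare_def using real_root_power_cancel[of "Suc m" "1/2"]
    by (simp add: xs_def del: power_Suc)
  define d where "d = 1 / (2 * real (Suc m))"
  have d0: "0 < d" "d \<le> 1/2" unfolding d_def by (auto simp: field_simps)
  have md: "real m * d \<le> 1/2" unfolding d_def by (auto simp: field_simps)
  have bern: "1 + real m * (- d) \<le> (1 + - d) ^ m"
    by (rule Bernoulli_inequality) (use d0 in auto)
  have p: "prod_list (map (\<lambda>x. utility x (1 - d)) xs) = d * (1 - d) ^ m"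
    unfolding xs_def using d0 by (simp add: utility_def prod_list_replicate)
  have "1 / (4 * real (Suc m)) = d * (1/2)" unfolding d_def by (simp add: field_simps)
  also have "\<dots> \<le> d * (1 - d) ^ m"
    using bern md d0 by (intro mult_left_mono) auto
  finally have "root (Suc m) (1 / (4 * real (Suc m))) \<le> nash_welfare xs (1 - d)"
    unfolding nash_welfare_def p by (simp add: xs_def)
  also have "\<dots> \<le> opt_nw xs" by (rule opt_ge[OF v]) (use d0 in auto)
  finally show "root (Suc m) (1 / (4 * real (Suc m))) \<le> opt_nw xs" .
qed

lemma mon_ge2: "2 \<le> approx_ratio mid_or_nearest"
proof (rule dense_le)
  fix z :: ereal assume z: "z < 2"
  show "z \<le> approx_ratio mid_or_nearest"
  proof (cases z)
    case (real r)
    then have r: "r / 2 < 1" using z by simp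
    from order_tendstoD(1)[OF root_lim r] obtain N where
      N: "\<And>k. N \<le> k \<Longrightarrow> r / 2 < root (Suc k) (1 / (4 * real (Suc k)))"
      unfolding eventually_sequentially by blast
    define m where "m = Suc N"
    have m: "r / 2 < root (Suc m) (1 / (4 * real (Suc m)))" "0 < m"
      using N[of m] unfolding m_def by auto
    define xs where "xs = 0 # replicate m (1::real)"
    note P = prof_bound[of m, OF m(2), folded xs_def]
    have "r \<le> opt_nw xs / nash_welfare xs (mid_or_nearest xs)"
      unfolding P(2) P(3) using P(4) m by simp
    then have "z \<le> ratio_at mid_or_nearest xs"
      unfolding ratio_at_def P(2) P(3) using real by simp
    also have "\<dots> \<le> approx_ratio mid_or_nearest"
      unfolding approx_ratio_def by (rule SUP_upper) (use P in simp)
    finally show ?thesis .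
  qed (use z in auto)
qed

lemma inf_case:
  assumes "M [0,1] = 0"
  shows "approx_ratio M = \<infinity>"
proof -
  have v: "valid_profile [0,1]" by (simp add: valid_profile_def)
  have "ratio_at M [0,1] = \<infinity>"
    unfolding ratio_at_def nash_welfare_def assms by (simp add: utility_def)
  moreover have "ratio_at M [0,1] \<le> approx_ratio M"
    unfolding approx_ratio_def by (rule SUP_upper) (use v in simp)
  ultimately show ?thesis by simp
qed

theorem theorem11:
  shows "approx_ratio leftmost = \<infinity> \<and> approx_ratio median = \<infinity>
         \<and> approx_ratio mid_or_nearest = 2"
  using inf_case[of leftmost] inf_case[of median] mon_le2 mon_ge2
  by (simp add: leftmost_def median_def)

end
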